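(* Let $A\ge 1$. For $0\le b\le a\le A$ define $$e(a,b)=\frac{2b(a-b)}{1+(a-b)^2}.$$ Then the maximum of $e$ over $0\le b\le a\le A$ is attained at $$a=A,\qquad b=\frac{1+A^2-\sqrt{1+A^2}}{A},$$ and the maximal value is $$e\!\left(A,\frac{1+A^2-\sqrt{1+A^2}}{A}\right)=\sqrt{1+A^2}-1.$$
   Context: Geometric meaning: the page is the rectangle $[0,1]\times[0,A]$ (width $1$, height $A\ge1$) with its top edge fixed. A crease through $(0,a)$ on the left edge and $(1,b)$ on the right edge, with $a\ge b$, reflects the lower trapezoid $(0,0),(1,0),(1,b),(0,a)$ across it. The reflected bottom-right corner then has $x$-coordinate $1+e(a,b)$. *)

theory Defs
  imports Complex_Main
begin

definition fold_e :: "real \<Rightarrow> real \<Rightarrow> real" where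
  "fold_e a b = 2 * b * (a - b) / (1 + (a - b)^2)"

end

theory Submission
  imports Defs
begin

lemma key:
  fixes A s d :: real
  assumes "s^2 = 1 + A^2" "s \<ge> 1"
  shows "2*(A-d)*d \<le> (s-1)*(1+d^2)"
proof -
  have AA: "A^2 = (s-1)*(s+1)" using assms(1) by (simp add: algebra_simps power2_eq_square)
  define c where "c = A/(s+1)"
  have Ac: "A = c*(s+1)" unfolding c_def using assms(2) by simp
  have Acv: "A*c = s - 1"
  proof -
    have "A*c*(s+1) = A*A" using Ac by (simp add: mult.assoc)
    also have "A*A = (s-1)*(s+1)" using AA by (simp add: power2_eq_square)
    finally have "A*c*(s+1) = (s-1)*(s+1)" .
    moreover have "s + 1 \<noteq> 0" using assms(2) by simp
    ultimately show ?thesis by simp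
  qed
  have "0 \<le> (s+1)*(d - c)^2" using assms by simp
  also have "(s+1)*(d - c)^2 = (s+1)*d^2 - 2*(c*(s+1))*d + (c*(s+1))*c"
    by (simp add: algebra_simps power2_eq_square)
  also have "\<dots> = (s+1)*d^2 - 2*A*d + A*c" using Ac by simp
  finally show ?thesis using Acv by (simp add: algebra_simps power2_eq_square)
qed

theorem mainTheorem5:
  fixes A :: real
  assumes "A \<ge> 1"
  defines "bstar \<equiv> (1 + A^2 - sqrt (1 + A^2)) / A"
  shows "0 \<le> bstar \<and> bstar \<le> A
     \<and> (\<forall>a b. 0 \<le> b \<and> b \<le> a \<and> a \<le> A \<longrightarrow> fold_e a b \<le> fold_e A bstar)
     \<and> fold_e A bstar = sqrt (1 + A^2) - 1"
proof -
  define s where "s = sqrt (1 + A^2)"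
  have s2: "s^2 = 1 + A^2" unfolding s_def by simp
  have s1: "s \<ge> 1" unfolding s_def by simp
  have AA: "A^2 = (s-1)*(s+1)" using s2 by (simp add: algebra_simps power2_eq_square)
  have Apos: "A > 0" using assms by simp
  have bs: "bstar = (s*s - s)/A" unfolding bstar_def s_def[symmetric] using s2
    by (simp add: power2_eq_square)
  have b0: "0 \<le> bstar" unfolding bs using s1 Apos
    by (intro divide_nonneg_pos) (auto simp: mult_ge1_I)
  have bA: "bstar \<le> A" unfolding bs using s1 Apos s2
    by (simp add: pos_divide_le_eq power2_eq_square)
  define d where "d = A/(s+1)"
  have Ad: "A = d*(s+1)" unfolding d_def using s1 by simp
  have Adv: "A*d = s - 1"
  proof -
    have "A*d*(s+1) = A*A" using Ad by (simp add: mult.assoc)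
    also have "A*A = (s-1)*(s+1)" using AA by (simp add: power2_eq_square)
    finally have "A*d*(s+1) = (s-1)*(s+1)" .
    moreover have "s + 1 \<noteq> 0" using s1 by simp
    ultimately show ?thesis by simp
  qed
  have dd: "bstar = A - d"
  proof -
    have "A - d = (A*A - A*d)/A" using Apos by (simp add: field_simps)
    also have "A*A - A*d = s*s - s" using AA Adv by (simp add: power2_eq_square algebra_simps)
    finally show ?thesis unfolding bs by simp
  qed
  have val: "fold_e A bstar = s - 1"
  proof -
    have eq: "2*(A-d)*d = (s-1)*(1+d^2)"
    proof -
      have "(s+1)*d*d = A*d" using Ad by simp
      moreover note Adv
      ultimately show ?thesis by (simp add: algebra_simps power2_eq_square)
    qed
    have "1 + d^2 > 0" by (simp add: add_pos_nonneg)
    then show ?thesis unfolding fold_e_def dd using eq by simp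
  qed
  have "\<forall>a b. 0 \<le> b \<and> b \<le> a \<and> a \<le> A \<longrightarrow> fold_e a b \<le> s - 1"
  proof (intro allI impI)
    fix a b :: real assume h: "0 \<le> b \<and> b \<le> a \<and> a \<le> A"
    define t where "t = a - b"
    have d0: "t \<ge> 0" using h t_def by simp
    have "2*b*t \<le> 2*(A-t)*t" using h d0 t_def by (intro mult_right_mono) auto
    also have "\<dots> \<le> (s-1)*(1+t^2)" by (rule key[OF s2 s1])
    finally have "2*b*t \<le> (s-1)*(1+t^2)" .
    moreover have "1 + t^2 > 0" by (simp add: add_pos_nonneg)
    ultimately show "fold_e a b \<le> s - 1" unfolding fold_e_def t_def[symmetric]
      by (simp add: divide_le_eq)
  qed
  thus ?thesis using b0 bA val s_def by simp
qed

end
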